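(* Let $c,N,n,n_1,n_2\in\mathbb{R}$, $D=\{\vec\gamma\in\mathbb{R}^3:\gamma_1^2+\gamma_2^2>0\}$, $\rho=\sqrt{\gamma_1^2+\gamma_2^2}$, and define $\vec\mu$ on $D$ by $$\mu_1=c\Big(-n\gamma_1-n_1\gamma_1^2+2n_1\gamma_2^2+n_1\gamma_3^2-3n_2\gamma_1\gamma_2+\frac{N\gamma_1}{\rho^{3}}\Big),\quad \mu_2=c\Big(-n\gamma_2+2n_2\gamma_1^2-n_2\gamma_2^2+n_2\gamma_3^2-3n_1\gamma_1\gamma_2+\frac{N\gamma_2}{\rho^{3}}\Big),$$ $$\mu_3=-c\gamma_3\Big(3n+5n_1\gamma_1+5n_2\gamma_2+\frac{N\gamma_3}{\rho}\Big).$$ Then $\Pi_{\vec\mu}$ defines a Poisson bracket on $\mathbb{R}^3\times D$, and $$C(\vec M,\vec\gamma)=\vec M\cdot\vec\gamma+c(n+n_1\gamma_1+n_2\gamma_2)(2\gamma_1^2+2\gamma_2^2+\gamma_3^2)+\tfrac12cN\Big(\frac{\gamma_3\rho^2-2}{\rho}-|\vec\gamma|^2\arctan\frac{\gamma_3}{\rho}\Big)$$ is a Casimir function of $\Pi_{\vec\mu}$.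
   Context: Coordinates on $\mathbb{R}^6$ are $(\vec M,\vec\gamma)=(M_1,M_2,M_3,\gamma_1,\gamma_2,\gamma_3)$. For a smooth $\vec\mu=(\mu_1,\mu_2,\mu_3)$ of $(\vec M,\vec\gamma)$, $\Pi_{\vec\mu}$ is the skew-symmetric $6\times6$ matrix $$\Pi_{\vec\mu}=\begin{bmatrix}0&-M_3-\mu_3&M_2+\mu_2&0&-\gamma_3&\gamma_2\\ M_3+\mu_3&0&-M_1-\mu_1&\gamma_3&0&-\gamma_1\\ -M_2-\mu_2&M_1+\mu_1&0&-\gamma_2&\gamma_1&0\\ 0&-\gamma_3&\gamma_2&0&0&0\\ \gamma_3&0&-\gamma_1&0&0&0\\ -\gamma_2&\gamma_1&0&0&0&0\end{bmatrix},$$ it "defines a Poisson bracket" if $\{f,g\}_{\vec\mu}=(\nabla f)^T\Pi_{\vec\mu}\nabla g$ satisfies the Jacobi identity, and a Casimir function is a smooth $C$ with $\Pi_{\vec\mu}\nabla C=0$. *)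

theory Defs
  imports "HOL-Analysis.Analysis"
begin

text \<open>Points of R^6 are vectors of type real^6; coordinate k (k = 0..5) is
  (M1,M2,M3,gamma1,gamma2,gamma3) in that order.\<close>

definition coord :: "nat \<Rightarrow> real^6 \<Rightarrow> real" where
  "coord k x = x $ (of_nat k :: 6)"

definition basis6 :: "nat \<Rightarrow> real^6" where
  "basis6 k = axis (of_nat k :: 6) 1"

definition partial :: "nat \<Rightarrow> (real^6 \<Rightarrow> real) \<Rightarrow> real^6 \<Rightarrow> real" where
  "partial k f x = deriv (\<lambda>t. f (x + t *\<^sub>R basis6 k)) 0"

fun iter_partial :: "nat list \<Rightarrow> (real^6 \<Rightarrow> real) \<Rightarrow> real^6 \<Rightarrow> real" where
  "iter_partial [] f = f"
| "iter_partial (k # ks) f = partial k (iter_partial ks f)"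

definition smooth_on6 :: "(real^6) set \<Rightarrow> (real^6 \<Rightarrow> real) \<Rightarrow> bool" where
  "smooth_on6 U f \<longleftrightarrow> (\<forall>ks. (\<forall>k\<in>set ks. k < 6) \<longrightarrow> iter_partial ks f differentiable_on U)"

definition grad6 :: "(real^6 \<Rightarrow> real) \<Rightarrow> real^6 \<Rightarrow> nat \<Rightarrow> real" where
  "grad6 f x k = partial k f x"

definition PiMat :: "(real^6 \<Rightarrow> real) \<Rightarrow> (real^6 \<Rightarrow> real) \<Rightarrow> (real^6 \<Rightarrow> real)
    \<Rightarrow> real^6 \<Rightarrow> nat \<Rightarrow> nat \<Rightarrow> real" where
  "PiMat mu1 mu2 mu3 x i j =
    (let M1 = coord 0 x; M2 = coord 1 x; M3 = coord 2 x;
         g1 = coord 3 x; g2 = coord 4 x; g3 = coord 5 x;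
         m1 = mu1 x; m2 = mu2 x; m3 = mu3 x in
     [[0, -M3-m3, M2+m2, 0, -g3, g2],
      [M3+m3, 0, -M1-m1, g3, 0, -g1],
      [-M2-m2, M1+m1, 0, -g2, g1, 0],
      [0, -g3, g2, 0, 0, 0],
      [g3, 0, -g1, 0, 0, 0],
      [-g2, g1, 0, 0, 0, 0]] ! i ! j)"

definition bracket :: "(real^6 \<Rightarrow> real) \<Rightarrow> (real^6 \<Rightarrow> real) \<Rightarrow> (real^6 \<Rightarrow> real)
    \<Rightarrow> (real^6 \<Rightarrow> real) \<Rightarrow> (real^6 \<Rightarrow> real) \<Rightarrow> real^6 \<Rightarrow> real" where
  "bracket mu1 mu2 mu3 f g x =
     (\<Sum>i<6. \<Sum>j<6. grad6 f x i * PiMat mu1 mu2 mu3 x i j * grad6 g x j)"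

definition defines_poisson_on :: "(real^6) set \<Rightarrow> (real^6 \<Rightarrow> real) \<Rightarrow> (real^6 \<Rightarrow> real)
    \<Rightarrow> (real^6 \<Rightarrow> real) \<Rightarrow> bool" where
  "defines_poisson_on U mu1 mu2 mu3 \<longleftrightarrow>
     (\<forall>f g h. smooth_on6 U f \<and> smooth_on6 U g \<and> smooth_on6 U h \<longrightarrow>
        (\<forall>x\<in>U. bracket mu1 mu2 mu3 f (bracket mu1 mu2 mu3 g h) x
              + bracket mu1 mu2 mu3 g (bracket mu1 mu2 mu3 h f) x
              + bracket mu1 mu2 mu3 h (bracket mu1 mu2 mu3 f g) x = 0))"

definition is_casimir_on :: "(real^6) set \<Rightarrow> (real^6 \<Rightarrow> real) \<Rightarrow> (real^6 \<Rightarrow> real)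
    \<Rightarrow> (real^6 \<Rightarrow> real) \<Rightarrow> (real^6 \<Rightarrow> real) \<Rightarrow> bool" where
  "is_casimir_on U mu1 mu2 mu3 C \<longleftrightarrow> smooth_on6 U C \<and>
     (\<forall>x\<in>U. \<forall>i<6. (\<Sum>j<6. PiMat mu1 mu2 mu3 x i j * grad6 C x j) = 0)"

definition domR3D :: "(real^6) set" where
  "domR3D = {x. (coord 3 x)\<^sup>2 + (coord 4 x)\<^sup>2 > 0}"

end

theory Submission
  imports Defs "HOL-Analysis.Analysis"
begin

lemma of_nat_6_eq: "j < 6 \<Longrightarrow> k < 6 \<Longrightarrow> ((of_nat j :: 6) = of_nat k) = (j = k)"
  by (auto simp: less_Suc_eq numeral_eq_Suc)

lemma coord_basis: "j < 6 \<Longrightarrow> k < 6 \<Longrightarrow> coord j (basis6 k) = (if j = k then 1 else 0)"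
  unfolding coord_def basis6_def axis_def using of_nat_6_eq by auto

lemma coord_add: "coord j (x + y) = coord j x + coord j y"
  by (simp add: coord_def)
lemma coord_scale: "coord j (t *\<^sub>R x) = t * coord j x"
  by (simp add: coord_def)

lemma coord_has_derivative[derivative_intros]:
  "((\<lambda>x. coord j x) has_derivative (\<lambda>h. coord j h)) F"
  unfolding coord_def by (rule bounded_linear_imp_has_derivative) (rule bounded_linear_vec_nth)

lemma partial_has_derivative:
  assumes "(f has_derivative f') (at x)"
  shows "((\<lambda>t. f (x + t *\<^sub>R b)) has_real_derivative f' b) (at 0)"
proof -
  have l: "linear f'" using assms has_derivative_linear by blast
  have "((\<lambda>t. f (x + t *\<^sub>R b)) has_derivative (\<lambda>t. f' (t *\<^sub>R b))) (at 0)"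
    by (rule has_derivative_compose[where f="\<lambda>t. x + t *\<^sub>R b", simplified])
       (auto intro!: derivative_eq_intros assms)
  moreover have "(\<lambda>t. f' (t *\<^sub>R b)) = (*) (f' b)"
    using l by (auto simp: linear_scale)
  ultimately show ?thesis by (simp add: has_field_derivative_def)
qed

lemma partial_eq:
  assumes "(f has_derivative f') (at x)"
  shows "partial k f x = f' (basis6 k)"
  unfolding partial_def using partial_has_derivative[OF assms] by (rule DERIV_imp_deriv)

lemma partial_local:
  assumes "open U" "x \<in> U" "\<And>y. y \<in> U \<Longrightarrow> f y = g y"
  shows "partial k f x = partial k g x"
proof -
  have o: "open ((\<lambda>t::real. x + t *\<^sub>R basis6 k) -` U)"
    by (rule open_vimage[OF assms(1)]) (intro continuous_intros)
  have "eventually (\<lambda>t. t \<in> (\<lambda>t::real. x + t *\<^sub>R basis6 k) -` U) (nhds 0)"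
    by (rule eventually_nhds_in_open[OF o]) (simp add: assms(2))
  then have "eventually (\<lambda>t. f (x + t *\<^sub>R basis6 k) = g (x + t *\<^sub>R basis6 k)) (nhds 0)"
    by eventually_elim (simp add: assms(3))
  then show ?thesis unfolding partial_def by (rule deriv_cong_ev) simp
qed

definition rr :: "real^6 \<Rightarrow> real" where
  "rr x = 1 / sqrt ((coord 3 x)\<^sup>2 + (coord 4 x)\<^sup>2)"
definition qq :: "real^6 \<Rightarrow> real" where
  "qq x = 1 / ((coord 3 x)\<^sup>2 + (coord 4 x)\<^sup>2 + (coord 5 x)\<^sup>2)"
definition AA :: "real^6 \<Rightarrow> real" where
  "AA x = arctan (coord 5 x * rr x)"

lemma rr_der:
  assumes "(coord 3 x)\<^sup>2 + (coord 4 x)\<^sup>2 > 0"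
  shows "(rr has_derivative (\<lambda>h. - (coord 3 x * coord 3 h + coord 4 x * coord 4 h) * rr x ^ 3)) (at x)"
proof -
  define S where "S = sqrt ((coord 3 x)\<^sup>2 + (coord 4 x)\<^sup>2)"
  have S: "S > 0" using assms by (simp add: S_def)
  show ?thesis
  unfolding rr_def[abs_def] S_def[symmetric]
  apply (intro derivative_eq_intros)
  apply (rule refl)
  using assms apply simp
  apply (rule refl)+
  using S S_def apply force
  apply (rule ext)
  apply (simp only: S_def[symmetric])
  using S apply (simp add: field_simps power3_eq_cube)
  done
qed


lemma qq_der:
  assumes "(coord 3 x)\<^sup>2 + (coord 4 x)\<^sup>2 > 0"
  shows "(qq has_derivative (\<lambda>h. - 2 * (coord 3 x * coord 3 h + coord 4 x * coord 4 h + coord 5 x * coord 5 h) * qq x ^ 2)) (at x)"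
proof -
  define R where "R = (coord 3 x)\<^sup>2 + (coord 4 x)\<^sup>2 + (coord 5 x)\<^sup>2"
  have R: "R > 0" using assms by (simp add: R_def add_pos_nonneg)
  show ?thesis
  unfolding qq_def[abs_def] R_def[symmetric]
  apply (intro derivative_eq_intros)
  apply (rule refl)+
  using R R_def apply force
  apply (rule ext)
  apply (simp only: R_def[symmetric])
  using R apply (simp add: field_simps power2_eq_square)
  done
qed

lemma ne1: "0 < S \<Longrightarrow> 0 < S * S + c * c \<Longrightarrow> S * (S * (S * (S * S))) + S * (S * (S * (c * c))) \<noteq> (0::real)"
proof -
  assume a: "0 < S" "0 < S * S + c * c"
  have "S * (S * (S * (S * S))) + S * (S * (S * (c * c))) = (S*S*S) * (S * S + c * c)" by algebra
  also have "\<dots> > 0" using a by simp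
  finally show ?thesis by simp
qed
lemma ne2: "0 < S \<Longrightarrow> 0 < S * S + c * c \<Longrightarrow> S * (S * S) + S * (c * c) \<noteq> (0::real)"
proof -
  assume a: "0 < S" "0 < S * S + c * c"
  have "S * (S * S) + S * (c * c) = S * (S * S + c * c)" by algebra
  also have "\<dots> > 0" using a by simp
  finally show ?thesis by simp
qed

lemma AA_der:
  assumes "(coord 3 x)\<^sup>2 + (coord 4 x)\<^sup>2 > 0"
  shows "(AA has_derivative (\<lambda>h. qq x * (coord 5 h * ((coord 3 x)\<^sup>2 + (coord 4 x)\<^sup>2) * rr x
            - coord 5 x * (coord 3 x * coord 3 h + coord 4 x * coord 4 h) * rr x))) (at x)"
proof -
  define S where "S = sqrt ((coord 3 x)\<^sup>2 + (coord 4 x)\<^sup>2)"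
  have S: "S > 0" using assms by (simp add: S_def)
  have sS: "(coord 3 x)\<^sup>2 + (coord 4 x)\<^sup>2 = S^2" using assms by (simp add: S_def)
  have r: "rr x = 1 / S" by (simp add: rr_def S_def)
  have q: "qq x = 1 / (S^2 + (coord 5 x)\<^sup>2)" by (simp add: qq_def sS)
  have pos: "S^2 + (coord 5 x)\<^sup>2 > 0" using S by (simp add: add_pos_nonneg)
  show ?thesis
  unfolding AA_def[abs_def]
  apply (intro derivative_eq_intros)
  apply (rule refl)
  apply (rule rr_der[OF assms])
  apply (rule refl)
  apply (rule ext)
  apply (simp only: sS r q)
  using S pos apply (simp add: field_simps power2_eq_square power3_eq_cube)
  apply (subst frac_eq_eq)
  apply (metis ne1)
  apply (metis ne2)
  apply algebra
  done
qed

definition U6 :: "(real^6) set" where "U6 = domR3D"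

lemma open_dom: "open domR3D"
  unfolding domR3D_def by (intro open_Collect_less continuous_intros) (auto simp: coord_def intro!: continuous_intros)

lemma partial_add:
  assumes "f differentiable (at x)" "g differentiable (at x)"
  shows "partial k (\<lambda>y. f y + g y) x = partial k f x + partial k g x"
proof -
  obtain f' g' where f: "(f has_derivative f') (at x)" and g: "(g has_derivative g') (at x)"
    using assms unfolding differentiable_def by blast
  show ?thesis using partial_eq[OF has_derivative_add[OF f g]] partial_eq[OF f] partial_eq[OF g] by simp
qed

lemma partial_mult:
  assumes "f differentiable (at x)" "g differentiable (at x)"
  shows "partial k (\<lambda>y. f y * g y) x = f x * partial k g x + partial k f x * g x"
proof -
  obtain f' g' where f: "(f has_derivative f') (at x)" and g: "(g has_derivative g') (at x)"
    using assms unfolding differentiable_def by blast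
  show ?thesis using partial_eq[OF has_derivative_mult[OF f g]] partial_eq[OF f] partial_eq[OF g] by simp
qed

lemma partial_const: "partial k (\<lambda>y. a) x = 0"
  using partial_eq[OF has_derivative_const] by simp

lemma partial_coord: "j < 6 \<Longrightarrow> k < 6 \<Longrightarrow> partial k (\<lambda>y. coord j y) x = (if j = k then 1 else 0)"
  using partial_eq[OF coord_has_derivative] coord_basis by simp

lemma partial_minus:
  assumes "f differentiable (at x)"
  shows "partial k (\<lambda>y. - f y) x = - partial k f x"
proof -
  obtain f' where f: "(f has_derivative f') (at x)"
    using assms unfolding differentiable_def by blast
  show ?thesis using partial_eq[OF has_derivative_minus[OF f]] partial_eq[OF f] by simp
qed

lemma partial_diff:
  assumes "f differentiable (at x)" "g differentiable (at x)"
  shows "partial k (\<lambda>y. f y - g y) x = partial k f x - partial k g x"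
proof -
  obtain f' g' where f: "(f has_derivative f') (at x)" and g: "(g has_derivative g') (at x)"
    using assms unfolding differentiable_def by blast
  show ?thesis using partial_eq[OF has_derivative_diff[OF f g]] partial_eq[OF f] partial_eq[OF g] by simp
qed

lemma partial_sum:
  assumes "finite A" "\<forall>i\<in>A. F i differentiable (at x)"
  shows "partial k (\<lambda>y. \<Sum>i\<in>A. F i y) x = (\<Sum>i\<in>A. partial k (F i) x)"
  using assms
proof (induction A rule: finite_induct)
  case empty
  then show ?case by (simp add: partial_const)
next
  case (insert a A)
  have "partial k (\<lambda>y. \<Sum>i\<in>insert a A. F i y) x = partial k (\<lambda>y. F a y + (\<Sum>i\<in>A. F i y)) x"
    using insert by simp
  also have "\<dots> = partial k (F a) x + partial k (\<lambda>y. \<Sum>i\<in>A. F i y) x"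
    by (rule partial_add) (use insert in auto)
  finally show ?case using insert by simp
qed

inductive Sm :: "(real^6 \<Rightarrow> real) \<Rightarrow> bool" where
  Sm_const: "Sm (\<lambda>x. a)"
| Sm_coord: "j < 6 \<Longrightarrow> Sm (\<lambda>x. coord j x)"
| Sm_rr: "Sm rr"
| Sm_qq: "Sm qq"
| Sm_AA: "Sm AA"
| Sm_add: "Sm f \<Longrightarrow> Sm g \<Longrightarrow> Sm (\<lambda>x. f x + g x)"
| Sm_mult: "Sm f \<Longrightarrow> Sm g \<Longrightarrow> Sm (\<lambda>x. f x * g x)"

lemma Sm_minus: "Sm f \<Longrightarrow> Sm (\<lambda>x. - f x)"
  using Sm_mult[OF Sm_const[of "-1"]] by simp
lemma Sm_diff: "Sm f \<Longrightarrow> Sm g \<Longrightarrow> Sm (\<lambda>x. f x - g x)"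
  using Sm_add[OF _ Sm_minus] by simp
lemma Sm_pow: "Sm f \<Longrightarrow> Sm (\<lambda>x. f x ^ n)"
  by (induction n) (auto intro: Sm_const Sm_mult)

lemmas Sm_intros = Sm_const Sm_coord Sm_rr Sm_qq Sm_AA Sm_add Sm_mult Sm_minus Sm_diff Sm_pow

lemma Sm_ok:
  assumes "Sm f"
  shows "(\<forall>x\<in>domR3D. f differentiable (at x)) \<and>
         (\<forall>k<6. \<exists>g. Sm g \<and> (\<forall>x\<in>domR3D. partial k f x = g x))"
  using assms
proof (induction rule: Sm.induct)
  case (Sm_const a)
  then show ?case by (auto simp: partial_const intro!: exI[of _ "\<lambda>x. 0"] Sm.intros)
next
  case (Sm_coord j)
  show ?case
    using partial_coord[OF Sm_coord]
    by (auto intro!: exI[of _ "\<lambda>x. if j = _ then 1 else 0"] Sm.intros differentiableI[OF coord_has_derivative])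
next
  case Sm_rr
  have d: "x \<in> domR3D \<Longrightarrow> (coord 3 x)\<^sup>2 + (coord 4 x)\<^sup>2 > 0" for x by (simp add: domR3D_def)
  show ?case
  proof (intro conjI allI impI ballI)
    fix x assume "x \<in> domR3D" then show "rr differentiable (at x)"
      using rr_der[OF d] differentiableI by blast
  next
    fix k :: nat assume k: "k < 6"
    show "\<exists>g. Sm g \<and> (\<forall>x\<in>domR3D. partial k rr x = g x)"
      by (rule exI[of _ "\<lambda>x. - (coord 3 x * coord 3 (basis6 k) + coord 4 x * coord 4 (basis6 k)) * rr x ^ 3"])
         (auto intro!: Sm_intros simp: partial_eq[OF rr_der[OF d]])
  qed
next
  case Sm_qq
  have d: "x \<in> domR3D \<Longrightarrow> (coord 3 x)\<^sup>2 + (coord 4 x)\<^sup>2 > 0" for x by (simp add: domR3D_def)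
  show ?case
  proof (intro conjI allI impI ballI)
    fix x assume "x \<in> domR3D" then show "qq differentiable (at x)"
      using qq_der[OF d] differentiableI by blast
  next
    fix k :: nat assume k: "k < 6"
    show "\<exists>g. Sm g \<and> (\<forall>x\<in>domR3D. partial k qq x = g x)"
      by (rule exI[of _ "\<lambda>x. - 2 * (coord 3 x * coord 3 (basis6 k) + coord 4 x * coord 4 (basis6 k) + coord 5 x * coord 5 (basis6 k)) * qq x ^ 2"])
         (auto intro!: Sm_intros simp: partial_eq[OF qq_der[OF d]])
  qed
next
  case Sm_AA
  have d: "x \<in> domR3D \<Longrightarrow> (coord 3 x)\<^sup>2 + (coord 4 x)\<^sup>2 > 0" for x by (simp add: domR3D_def)
  show ?case
  proof (intro conjI allI impI ballI)
    fix x assume "x \<in> domR3D" then show "AA differentiable (at x)"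
      using AA_der[OF d] differentiableI by blast
  next
    fix k :: nat assume k: "k < 6"
    show "\<exists>g. Sm g \<and> (\<forall>x\<in>domR3D. partial k AA x = g x)"
      by (rule exI[of _ "\<lambda>x. qq x * (coord 5 (basis6 k) * ((coord 3 x)\<^sup>2 + (coord 4 x)\<^sup>2) * rr x
            - coord 5 x * (coord 3 x * coord 3 (basis6 k) + coord 4 x * coord 4 (basis6 k)) * rr x)"])
         (auto intro!: Sm_intros simp: partial_eq[OF AA_der[OF d]])
  qed
next
  case (Sm_add f g)
  show ?case
  proof (intro conjI allI impI ballI)
    fix x assume "x \<in> domR3D" then show "(\<lambda>x. f x + g x) differentiable (at x)"
      using Sm_add.IH by auto
  next
    fix k :: nat assume k: "k < 6"
    obtain F G where F: "Sm F" "\<forall>x\<in>domR3D. partial k f x = F x"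
      and G: "Sm G" "\<forall>x\<in>domR3D. partial k g x = G x" using Sm_add.IH k by blast
    show "\<exists>h. Sm h \<and> (\<forall>x\<in>domR3D. partial k (\<lambda>x. f x + g x) x = h x)"
      by (rule exI[of _ "\<lambda>x. F x + G x"]) (use F G Sm_add.IH in \<open>auto intro!: Sm_intros simp: partial_add\<close>)
  qed
next
  case (Sm_mult f g)
  show ?case
  proof (intro conjI allI impI ballI)
    fix x assume "x \<in> domR3D" then show "(\<lambda>x. f x * g x) differentiable (at x)"
      using Sm_mult.IH by auto
  next
    fix k :: nat assume k: "k < 6"
    obtain F G where F: "Sm F" "\<forall>x\<in>domR3D. partial k f x = F x"
      and G: "Sm G" "\<forall>x\<in>domR3D. partial k g x = G x" using Sm_mult.IH k by blast
    show "\<exists>h. Sm h \<and> (\<forall>x\<in>domR3D. partial k (\<lambda>x. f x * g x) x = h x)"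
      by (rule exI[of _ "\<lambda>x. f x * G x + F x * g x"]) (use F G Sm_mult.IH Sm_mult.hyps in \<open>auto intro!: Sm_intros simp: partial_mult\<close>)
  qed
qed

lemma iter_partial_append: "iter_partial (ks @ [k]) f = iter_partial ks (partial k f)"
  by (induction ks) auto

lemma smooth_from_Sm:
  assumes "Sm f"
  shows "smooth_on6 domR3D f"
proof -
  have "\<forall>f. Sm f \<longrightarrow> (\<exists>g. Sm g \<and> (\<forall>x\<in>domR3D. iter_partial ks f x = g x))"
    if "\<forall>k\<in>set ks. k < 6" for ks
    using that
  proof (induction ks)
    case Nil then show ?case by auto
  next
    case (Cons k ks)
    show ?case
    proof (intro allI impI)
      fix f assume "Sm f"
      then obtain g where g: "Sm g" "\<forall>x\<in>domR3D. iter_partial ks f x = g x" using Cons by auto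
      obtain h where h: "Sm h" "\<forall>x\<in>domR3D. partial k g x = h x" using Sm_ok[OF g(1)] Cons.prems by auto
      have "\<forall>x\<in>domR3D. iter_partial (k # ks) f x = h x"
        using partial_local[OF open_dom _ g(2)[rule_format]] h by simp
      then show "\<exists>g. Sm g \<and> (\<forall>x\<in>domR3D. iter_partial (k # ks) f x = g x)" using h by blast
    qed
  qed
  then show ?thesis unfolding smooth_on6_def
  proof (intro allI impI)
    fix ks :: "nat list" assume H: "\<And>ks. \<forall>k\<in>set ks. k < 6 \<Longrightarrow> \<forall>f. Sm f \<longrightarrow> (\<exists>g. Sm g \<and> (\<forall>x\<in>domR3D. iter_partial ks f x = g x))"
      and ks: "\<forall>k\<in>set ks. k < 6"
    obtain g where g: "Sm g" "\<forall>x\<in>domR3D. iter_partial ks f x = g x" using H[OF ks] assms by blast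
    show "iter_partial ks f differentiable_on domR3D"
      unfolding differentiable_on_def
    proof
      fix x assume x: "x \<in> domR3D"
      obtain g' where "(g has_derivative g') (at x)"
        using Sm_ok[OF g(1)] x unfolding differentiable_def by blast
      then have "(iter_partial ks f has_derivative g') (at x)"
        by (rule has_derivative_transform_within_open[OF _ open_dom x]) (use g in auto)
      then show "iter_partial ks f differentiable (at x within domR3D)"
        using differentiableI has_derivative_at_withinI by blast
    qed
  qed
qed

lemma line_deriv:
  fixes F D :: "real^6 \<Rightarrow> real"
  assumes "\<forall>y\<in>U. ((\<lambda>t. F (y + t *\<^sub>R b)) has_real_derivative D y) (at 0)"
    and "y0 + s *\<^sub>R b \<in> U"
  shows "((\<lambda>s. F (y0 + s *\<^sub>R b)) has_real_derivative D (y0 + s *\<^sub>R b)) (at s)"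
proof -
  have "((\<lambda>t. F ((y0 + s *\<^sub>R b) + t *\<^sub>R b)) has_real_derivative D (y0 + s *\<^sub>R b)) (at 0)"
    using assms by blast
  moreover have "(\<lambda>t. F ((y0 + s *\<^sub>R b) + t *\<^sub>R b)) = (\<lambda>t. F (y0 + (t + s) *\<^sub>R b))"
    by (rule ext) (simp add: scaleR_add_left algebra_simps)
  ultimately have "((\<lambda>t. F (y0 + (t + s) *\<^sub>R b)) has_real_derivative D (y0 + s *\<^sub>R b)) (at 0)"
    by metis
  then show ?thesis using DERIV_shift[of "\<lambda>s. F (y0 + s *\<^sub>R b)" _ 0 s] by (simp only: add_0_left)
qed

lemma double_mvt:
  fixes g G1 G12 :: "real^6 \<Rightarrow> real"
  assumes d1: "\<forall>y\<in>U. ((\<lambda>t. g (y + t *\<^sub>R b1)) has_real_derivative G1 y) (at 0)"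
    and d12: "\<forall>y\<in>U. ((\<lambda>t. G1 (y + t *\<^sub>R b2)) has_real_derivative G12 y) (at 0)"
    and h: "h > 0"
    and inU: "\<And>s t. 0 \<le> s \<Longrightarrow> s \<le> h \<Longrightarrow> 0 \<le> t \<Longrightarrow> t \<le> h \<Longrightarrow> (x + t *\<^sub>R b2) + s *\<^sub>R b1 \<in> U"
  shows "\<exists>s t. 0 < s \<and> s < h \<and> 0 < t \<and> t < h \<and>
    g ((x + h *\<^sub>R b2) + h *\<^sub>R b1) - g (x + h *\<^sub>R b1) - g (x + h *\<^sub>R b2) + g x
      = h * h * G12 ((x + s *\<^sub>R b1) + t *\<^sub>R b2)"
proof -
  define \<phi> where "\<phi> s = g ((x + h *\<^sub>R b2) + s *\<^sub>R b1) - g (x + s *\<^sub>R b1)" for s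
  have "DERIV \<phi> s :> G1 ((x + h *\<^sub>R b2) + s *\<^sub>R b1) - G1 (x + s *\<^sub>R b1)" if "0 \<le> s" "s \<le> h" for s
    unfolding \<phi>_def
    apply (rule DERIV_diff)
    apply (rule line_deriv[OF d1])
    using inU[of s h] that h apply simp
    apply (rule line_deriv[OF d1, of "x" s])
    using inU[of s 0] that h by simp
  then have "\<exists>z. 0 < z \<and> z < h \<and> \<phi> h - \<phi> 0 = (h - 0) * (G1 ((x + h *\<^sub>R b2) + z *\<^sub>R b1) - G1 (x + z *\<^sub>R b1))"
    by (intro MVT2[OF h]) 
  then obtain s where s: "0 < s" "s < h"
    "\<phi> h - \<phi> 0 = (h - 0) * (G1 ((x + h *\<^sub>R b2) + s *\<^sub>R b1) - G1 (x + s *\<^sub>R b1))"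
    by blast
  have "DERIV (\<lambda>t. G1 ((x + s *\<^sub>R b1) + t *\<^sub>R b2)) t :> G12 ((x + s *\<^sub>R b1) + t *\<^sub>R b2)"
    if "0 \<le> t" "t \<le> h" for t
    apply (rule line_deriv[OF d12])
    using inU[of s t] that s by (simp add: add_ac)
  then have "\<exists>z. 0 < z \<and> z < h \<and> G1 ((x + s *\<^sub>R b1) + h *\<^sub>R b2) - G1 ((x + s *\<^sub>R b1) + 0 *\<^sub>R b2) = (h - 0) * G12 ((x + s *\<^sub>R b1) + z *\<^sub>R b2)"
    by (intro MVT2[OF h])
  then obtain t where t: "0 < t" "t < h"
    "G1 ((x + s *\<^sub>R b1) + h *\<^sub>R b2) - G1 ((x + s *\<^sub>R b1) + 0 *\<^sub>R b2) = (h - 0) * G12 ((x + s *\<^sub>R b1) + t *\<^sub>R b2)"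
    by blast
  have "g ((x + h *\<^sub>R b2) + h *\<^sub>R b1) - g (x + h *\<^sub>R b1) - g (x + h *\<^sub>R b2) + g x = \<phi> h - \<phi> 0"
    by (simp add: \<phi>_def)
  also have "\<dots> = h * h * G12 ((x + s *\<^sub>R b1) + t *\<^sub>R b2)"
    using s(3) t(3) by (simp add: add_ac)
  finally show ?thesis using s t by blast
qed

lemma schwarz:
  fixes g G1 G2 G12 G21 :: "real^6 \<Rightarrow> real"
  assumes U: "open U" "x \<in> U"
    and d1: "\<forall>y\<in>U. ((\<lambda>t. g (y + t *\<^sub>R b1)) has_real_derivative G1 y) (at 0)"
    and d2: "\<forall>y\<in>U. ((\<lambda>t. g (y + t *\<^sub>R b2)) has_real_derivative G2 y) (at 0)"
    and d12: "\<forall>y\<in>U. ((\<lambda>t. G1 (y + t *\<^sub>R b2)) has_real_derivative G12 y) (at 0)"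
    and d21: "\<forall>y\<in>U. ((\<lambda>t. G2 (y + t *\<^sub>R b1)) has_real_derivative G21 y) (at 0)"
    and c12: "isCont G12 x" and c21: "isCont G21 x"
  shows "G12 x = G21 x"
proof (rule ccontr)
  assume ne: "G12 x \<noteq> G21 x"
  define \<epsilon> where "\<epsilon> = \<bar>G12 x - G21 x\<bar> / 2"
  have ep: "\<epsilon> > 0" using ne by (simp add: \<epsilon>_def)
  obtain d1' where d1': "d1' > 0" "\<And>y. dist y x < d1' \<Longrightarrow> dist (G12 y) (G12 x) < \<epsilon>"
    using c12 ep unfolding continuous_at_eps_delta by blast
  obtain d2' where d2': "d2' > 0" "\<And>y. dist y x < d2' \<Longrightarrow> dist (G21 y) (G21 x) < \<epsilon>"
    using c21 ep unfolding continuous_at_eps_delta by blast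
  obtain e where e: "e > 0" "ball x e \<subseteq> U" using U open_contains_ball by blast
  define m where "m = min e (min d1' d2')"
  have m: "m > 0" using e d1' d2' by (simp add: m_def)
  define B where "B = norm b1 + norm b2 + 1"
  have B: "B > 0" by (simp add: B_def add_nonneg_pos)
  define h where "h = m / (2 * B)"
  have h: "h > 0" using m B by (simp add: h_def)
  have hB: "h * B < m" using m B by (simp add: h_def field_simps)
  have close: "dist ((x + s *\<^sub>R b1) + t *\<^sub>R b2) x < m" if "0 \<le> s" "s \<le> h" "0 \<le> t" "t \<le> h" for s t
  proof -
    have "dist ((x + s *\<^sub>R b1) + t *\<^sub>R b2) x = norm (s *\<^sub>R b1 + t *\<^sub>R b2)"
      by (simp add: dist_norm)
    also have "\<dots> \<le> s * norm b1 + t * norm b2"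
      using that by (metis (no_types) abs_of_nonneg norm_scaleR norm_triangle_ineq)
    also have "\<dots> \<le> h * norm b1 + h * norm b2"
      using that by (intro add_mono mult_right_mono) auto
    also have "\<dots> < m" using hB h by (simp add: B_def algebra_simps)
    finally show ?thesis .
  qed
  have inU1: "(x + t *\<^sub>R b2) + s *\<^sub>R b1 \<in> U" if "0 \<le> s" "s \<le> h" "0 \<le> t" "t \<le> h" for s t
  proof -
    have "dist x ((x + s *\<^sub>R b1) + t *\<^sub>R b2) < e" using close[OF that] by (simp add: m_def dist_commute)
    then show ?thesis using e by (auto simp: add_ac)
  qed
  have inU2: "(x + t *\<^sub>R b1) + s *\<^sub>R b2 \<in> U" if "0 \<le> s" "s \<le> h" "0 \<le> t" "t \<le> h" for s t
    using inU1[of t s] that by (simp add: add_ac)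
  obtain s t where st: "0 < s" "s < h" "0 < t" "t < h"
    "g ((x + h *\<^sub>R b2) + h *\<^sub>R b1) - g (x + h *\<^sub>R b1) - g (x + h *\<^sub>R b2) + g x
      = h * h * G12 ((x + s *\<^sub>R b1) + t *\<^sub>R b2)"
    using double_mvt[OF d1 d12 h inU1] by blast
  obtain s' t' where st': "0 < s'" "s' < h" "0 < t'" "t' < h"
    "g ((x + h *\<^sub>R b1) + h *\<^sub>R b2) - g (x + h *\<^sub>R b2) - g (x + h *\<^sub>R b1) + g x
      = h * h * G21 ((x + s' *\<^sub>R b2) + t' *\<^sub>R b1)"
    using double_mvt[OF d2 d21 h inU2] by blast
  have "h * h * G12 ((x + s *\<^sub>R b1) + t *\<^sub>R b2) = h * h * G21 ((x + s' *\<^sub>R b2) + t' *\<^sub>R b1)"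
  proof -
    have e1: "x + h *\<^sub>R b2 + h *\<^sub>R b1 = x + h *\<^sub>R b1 + h *\<^sub>R b2" by (simp add: algebra_simps)
    show ?thesis using st(5) st'(5) unfolding e1 by linarith
  qed
  then have eq0: "G12 ((x + s *\<^sub>R b1) + t *\<^sub>R b2) = G21 ((x + s' *\<^sub>R b2) + t' *\<^sub>R b1)"
    using h by simp
  have e2: "(x + s' *\<^sub>R b2) + t' *\<^sub>R b1 = (x + t' *\<^sub>R b1) + s' *\<^sub>R b2" by (simp add: algebra_simps)
  have eq: "G12 ((x + s *\<^sub>R b1) + t *\<^sub>R b2) = G21 ((x + t' *\<^sub>R b1) + s' *\<^sub>R b2)"
    using eq0 unfolding e2 .
  have p1: "dist (G12 ((x + s *\<^sub>R b1) + t *\<^sub>R b2)) (G12 x) < \<epsilon>"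
    using close[of s t] st d1'(2) by (simp add: m_def)
  have p2: "dist (G21 ((x + t' *\<^sub>R b1) + s' *\<^sub>R b2)) (G21 x) < \<epsilon>"
    using close[of t' s'] st' d2'(2) by (simp add: m_def)
  have "\<bar>G12 x - G21 x\<bar> < 2 * \<epsilon>" using p1 p2 eq by (simp add: dist_real_def)
  then show False by (simp add: \<epsilon>_def)
qed

lemma swap3: "(\<Sum>a\<in>I. \<Sum>b\<in>I. \<Sum>c\<in>I. X a b c) = (\<Sum>c\<in>I. \<Sum>a\<in>I. \<Sum>b\<in>I. (X a b c :: real))"
proof -
  have "(\<Sum>a\<in>I. \<Sum>b\<in>I. \<Sum>c\<in>I. X a b c) = (\<Sum>a\<in>I. \<Sum>c\<in>I. \<Sum>b\<in>I. X a b c)"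
    by (rule sum.cong[OF refl]) (rule sum.swap)
  also have "\<dots> = (\<Sum>c\<in>I. \<Sum>a\<in>I. \<Sum>b\<in>I. X a b c)" by (rule sum.swap)
  finally show ?thesis .
qed

definition Qf :: "nat set \<Rightarrow> (nat \<Rightarrow> nat \<Rightarrow> real) \<Rightarrow> (nat \<Rightarrow> real) \<Rightarrow> (nat \<Rightarrow> real) \<Rightarrow> real" where
  "Qf I S a b = (\<Sum>j\<in>I. \<Sum>k\<in>I. a j * S j k * b k)"

lemma Qf_sym:
  assumes "\<And>i j. i \<in> I \<Longrightarrow> j \<in> I \<Longrightarrow> S i j = S j i"
  shows "Qf I S a b = Qf I S b a"
proof -
  have "Qf I S a b = (\<Sum>k\<in>I. \<Sum>j\<in>I. a j * S j k * b k)" unfolding Qf_def by (rule sum.swap)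
  also have "\<dots> = Qf I S b a" unfolding Qf_def
  proof (intro sum.cong refl)
    fix k j assume "k \<in> I" "j \<in> I"
    then have "S j k = S k j" using assms by blast
    then show "a j * S j k * b k = b k * S k j * a j" by simp
  qed
  finally show ?thesis .
qed

definition Jf where
  "Jf I P DP F G H GG HH = (\<Sum>i\<in>I. \<Sum>j\<in>I. F i * P i j *
     (\<Sum>k\<in>I. \<Sum>l\<in>I. GG j k * P k l * H l + G k * DP j k l * H l + G k * P k l * HH j l))"

definition Tf where
  "Tf I P DP F G H = (\<Sum>a\<in>I. \<Sum>b\<in>I. \<Sum>c\<in>I. F a * G b * H c * (\<Sum>j\<in>I. P a j * DP j b c))"

definition uf where "uf I P F j = (\<Sum>i\<in>I. F i * P i j)"

lemma Jf_decomp: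
  fixes P :: "nat \<Rightarrow> nat \<Rightarrow> real" and DP :: "nat \<Rightarrow> nat \<Rightarrow> nat \<Rightarrow> real"
    and F G H :: "nat \<Rightarrow> real" and FF GG HH :: "nat \<Rightarrow> nat \<Rightarrow> real"
  assumes skew: "\<And>i j. i \<in> I \<Longrightarrow> j \<in> I \<Longrightarrow> P i j = - P j i"
  shows "Jf I P DP F G H GG HH = - Qf I GG (uf I P F) (uf I P H) + Qf I HH (uf I P F) (uf I P G) + Tf I P DP F G H"
proof -
  have J: "Jf I P DP F G H GG HH = (\<Sum>j\<in>I. uf I P F j *
     (\<Sum>k\<in>I. \<Sum>l\<in>I. GG j k * P k l * H l + G k * DP j k l * H l + G k * P k l * HH j l))"
    unfolding Jf_def uf_def
    by (subst sum.swap) (simp add: sum_distrib_right mult_ac)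
  have inner: "(\<Sum>k\<in>I. \<Sum>l\<in>I. GG j k * P k l * H l + G k * DP j k l * H l + G k * P k l * HH j l)
     = - (\<Sum>k\<in>I. GG j k * uf I P H k) + (\<Sum>k\<in>I. \<Sum>l\<in>I. G k * DP j k l * H l) + (\<Sum>l\<in>I. uf I P G l * HH j l)" for j
  proof -
    have a: "(\<Sum>k\<in>I. \<Sum>l\<in>I. GG j k * P k l * H l) = - (\<Sum>k\<in>I. GG j k * uf I P H k)"
      unfolding uf_def sum_distrib_left sum_negf[symmetric]
    proof (intro sum.cong refl)
      fix k l assume "k \<in> I" "l \<in> I"
      then have "P k l = - P l k" by (rule skew)
      then show "GG j k * P k l * H l = - (GG j k * (H l * P l k))" by simp
    qed
    have b: "(\<Sum>k\<in>I. \<Sum>l\<in>I. G k * P k l * HH j l) = (\<Sum>l\<in>I. uf I P G l * HH j l)"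
      unfolding uf_def sum_distrib_right by (subst sum.swap) (simp add: mult_ac)
    show ?thesis using a b by (simp add: sum.distrib)
  qed
  have T: "Tf I P DP F G H = (\<Sum>j\<in>I. uf I P F j * (\<Sum>k\<in>I. \<Sum>l\<in>I. G k * DP j k l * H l))"
  proof -
    have "Tf I P DP F G H = (\<Sum>a\<in>I. \<Sum>j\<in>I. \<Sum>b\<in>I. \<Sum>c\<in>I. F a * P a j * (G b * DP j b c * H c))"
      unfolding Tf_def
      apply (rule sum.cong[OF refl])
      apply (simp only: sum_distrib_left)
      apply (subst swap3)
      apply (intro sum.cong refl)
      apply (simp add: mult_ac)
      done
    also have "\<dots> = (\<Sum>j\<in>I. \<Sum>a\<in>I. \<Sum>b\<in>I. \<Sum>c\<in>I. F a * P a j * (G b * DP j b c * H c))"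
      by (rule sum.swap)
    also have "\<dots> = (\<Sum>j\<in>I. uf I P F j * (\<Sum>k\<in>I. \<Sum>l\<in>I. G k * DP j k l * H l))"
      unfolding uf_def sum_distrib_right unfolding sum_distrib_left by simp
    finally show ?thesis .
  qed
  show ?thesis unfolding J inner T Qf_def
    by (simp add: sum_distrib_left sum_distrib_right distrib_left right_diff_distrib sum.distrib sum_subtractf sum_negf mult_ac)
qed

lemma jacobi_alg:
  fixes P :: "nat \<Rightarrow> nat \<Rightarrow> real" and DP :: "nat \<Rightarrow> nat \<Rightarrow> nat \<Rightarrow> real"
    and F G H :: "nat \<Rightarrow> real" and FF GG HH :: "nat \<Rightarrow> nat \<Rightarrow> real"
  assumes skew: "\<And>i j. i \<in> I \<Longrightarrow> j \<in> I \<Longrightarrow> P i j = - P j i"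
    and sF: "\<And>i j. i \<in> I \<Longrightarrow> j \<in> I \<Longrightarrow> FF i j = FF j i"
    and sG: "\<And>i j. i \<in> I \<Longrightarrow> j \<in> I \<Longrightarrow> GG i j = GG j i"
    and sH: "\<And>i j. i \<in> I \<Longrightarrow> j \<in> I \<Longrightarrow> HH i j = HH j i"
    and sch: "\<And>i k l. i \<in> I \<Longrightarrow> k \<in> I \<Longrightarrow> l \<in> I \<Longrightarrow>
       (\<Sum>j\<in>I. P i j * DP j k l + P k j * DP j l i + P l j * DP j i k) = 0"
  shows "Jf I P DP F G H GG HH + Jf I P DP G H F HH FF + Jf I P DP H F G FF GG = 0"
proof -
  have T2: "Tf I P DP G H F = (\<Sum>a\<in>I. \<Sum>b\<in>I. \<Sum>c\<in>I. F a * G b * H c * (\<Sum>j\<in>I. P b j * DP j c a))"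
    unfolding Tf_def
    by (subst swap3[of "\<lambda>a b c. G a * H b * F c * (\<Sum>j\<in>I. P a j * DP j b c)"]) (simp add: mult_ac)
  have T3: "Tf I P DP H F G = (\<Sum>a\<in>I. \<Sum>b\<in>I. \<Sum>c\<in>I. F a * G b * H c * (\<Sum>j\<in>I. P c j * DP j a b))"
    unfolding Tf_def
    apply (subst swap3[of "\<lambda>a b c. H a * F b * G c * (\<Sum>j\<in>I. P a j * DP j b c)"])
    apply (subst swap3)
    apply (simp add: mult_ac)
    done
  have Tsum: "Tf I P DP F G H + Tf I P DP G H F + Tf I P DP H F G = 0"
    unfolding T2 T3 unfolding Tf_def
    by (simp add: sum.distrib[symmetric] distrib_left[symmetric] sch)
  have q1: "Qf I FF (uf I P G) (uf I P H) = Qf I FF (uf I P H) (uf I P G)" by (rule Qf_sym) (rule sF)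
  have q2: "Qf I GG (uf I P F) (uf I P H) = Qf I GG (uf I P H) (uf I P F)" by (rule Qf_sym) (rule sG)
  have q3: "Qf I HH (uf I P F) (uf I P G) = Qf I HH (uf I P G) (uf I P F)" by (rule Qf_sym) (rule sH)
  show ?thesis
    using Tsum q1 q2 q3 Jf_decomp[of I P DP F G H GG HH, OF skew] Jf_decomp[of I P DP G H F HH FF, OF skew]
      Jf_decomp[of I P DP H F G FF GG, OF skew]
    by linarith
qed

definition Ptab :: "real \<Rightarrow> real \<Rightarrow> real \<Rightarrow> real \<Rightarrow> real \<Rightarrow> real \<Rightarrow> real \<Rightarrow> real \<Rightarrow> real \<Rightarrow> nat \<Rightarrow> nat \<Rightarrow> real" where
  "Ptab M1 M2 M3 g1 g2 g3 m1 m2 m3 i j =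
     [[0, -M3-m3, M2+m2, 0, -g3, g2],
      [M3+m3, 0, -M1-m1, g3, 0, -g1],
      [-M2-m2, M1+m1, 0, -g2, g1, 0],
      [0, -g3, g2, 0, 0, 0],
      [g3, 0, -g1, 0, 0, 0],
      [-g2, g1, 0, 0, 0, 0]] ! i ! j"

lemma PiMat_Ptab: "PiMat m1 m2 m3 x i j = Ptab (coord 0 x) (coord 1 x) (coord 2 x) (coord 3 x) (coord 4 x) (coord 5 x) (m1 x) (m2 x) (m3 x) i j"
  by (simp add: PiMat_def Ptab_def Let_def)

lemma less6: "(k::nat) < 6 \<Longrightarrow> k = 0 \<or> k = 1 \<or> k = 2 \<or> k = 3 \<or> k = 4 \<or> k = 5"
  by auto

lemma sum6: "(\<Sum>j<(6::nat). f j) = f 0 + f 1 + f 2 + f 3 + f 4 + (f 5 :: real)"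
  by (simp add: eval_nat_numeral)

lemma Ptab_skew: "i < 6 \<Longrightarrow> j < 6 \<Longrightarrow> Ptab M1 M2 M3 g1 g2 g3 m1 m2 m3 i j = - Ptab M1 M2 M3 g1 g2 g3 m1 m2 m3 j i"
  by (drule less6, drule less6) (auto simp: Ptab_def)

definition dv :: "nat \<Rightarrow> nat \<Rightarrow> real" where "dv a j = (if a = j then 1 else 0)"

definition dm :: "(nat \<Rightarrow> nat \<Rightarrow> real) \<Rightarrow> nat \<Rightarrow> nat \<Rightarrow> real" where
  "dm D a j = (if j = 3 then D a 0 else if j = 4 then D a 1 else if j = 5 then D a 2 else 0)"

definition DPt where
  "DPt D j k l = Ptab (dv 0 j) (dv 1 j) (dv 2 j) (dv 3 j) (dv 4 j) (dv 5 j) (dm D 0 j) (dm D 1 j) (dm D 2 j) k l"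

lemma schouten_tab:
  assumes curl: "g1 * (D 2 1 - D 1 2) + g2 * (D 0 2 - D 2 0) + g3 * (D 1 0 - D 0 1) = 0"
    and "i < 6" "k < 6" "l < 6"
  shows "(\<Sum>j<6. Ptab M1 M2 M3 g1 g2 g3 m1 m2 m3 i j * DPt D j k l
              + Ptab M1 M2 M3 g1 g2 g3 m1 m2 m3 k j * DPt D j l i
              + Ptab M1 M2 M3 g1 g2 g3 m1 m2 m3 l j * DPt D j i k) = 0"
  using assms(2-4)
  apply (simp only: sum6)
  apply (drule less6, drule less6, drule less6)
  apply (elim disjE)
  apply (simp_all add: Ptab_def DPt_def dv_def dm_def)
  using curl apply (simp_all add: algebra_simps)
  done


lemma partial_Ptab:
  assumes "k < 6" "l < 6"
    and d: "f1 differentiable (at x)" "f2 differentiable (at x)" "f3 differentiable (at x)"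
      "f4 differentiable (at x)" "f5 differentiable (at x)" "f6 differentiable (at x)"
      "f7 differentiable (at x)" "f8 differentiable (at x)" "f9 differentiable (at x)"
  shows "partial j (\<lambda>y. Ptab (f1 y) (f2 y) (f3 y) (f4 y) (f5 y) (f6 y) (f7 y) (f8 y) (f9 y) k l) x
       = Ptab (partial j f1 x) (partial j f2 x) (partial j f3 x) (partial j f4 x) (partial j f5 x)
              (partial j f6 x) (partial j f7 x) (partial j f8 x) (partial j f9 x) k l"
  using assms(1,2)
  apply (drule_tac less6, drule_tac less6)
  apply (elim disjE)
  apply (simp_all add: Ptab_def partial_const partial_add partial_minus partial_diff d)
  done

lemma diff_Ptab:
  assumes "k < 6" "l < 6"
    and d: "f1 differentiable (at x)" "f2 differentiable (at x)" "f3 differentiable (at x)"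
      "f4 differentiable (at x)" "f5 differentiable (at x)" "f6 differentiable (at x)"
      "f7 differentiable (at x)" "f8 differentiable (at x)" "f9 differentiable (at x)"
  shows "(\<lambda>y. Ptab (f1 y) (f2 y) (f3 y) (f4 y) (f5 y) (f6 y) (f7 y) (f8 y) (f9 y) k l) differentiable (at x)"
  using assms(1,2)
  apply (drule_tac less6, drule_tac less6)
  apply (elim disjE)
  apply (simp_all add: Ptab_def d)
  done

definition rhoF :: "real^6 \<Rightarrow> real" where "rhoF x = sqrt ((coord 3 x)\<^sup>2 + (coord 4 x)\<^sup>2)"

definition MU1 :: "real \<Rightarrow> real \<Rightarrow> real \<Rightarrow> real \<Rightarrow> real \<Rightarrow> real^6 \<Rightarrow> real" where
  "MU1 c N n n1 n2 = (\<lambda>x. c * (- n * coord 3 x - n1 * (coord 3 x)\<^sup>2 + 2 * n1 * (coord 4 x)\<^sup>2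
              + n1 * (coord 5 x)\<^sup>2 - 3 * n2 * coord 3 x * coord 4 x
              + N * coord 3 x / (rhoF x) ^ 3))"
definition MU2 :: "real \<Rightarrow> real \<Rightarrow> real \<Rightarrow> real \<Rightarrow> real \<Rightarrow> real^6 \<Rightarrow> real" where
  "MU2 c N n n1 n2 = (\<lambda>x. c * (- n * coord 4 x + 2 * n2 * (coord 3 x)\<^sup>2 - n2 * (coord 4 x)\<^sup>2
              + n2 * (coord 5 x)\<^sup>2 - 3 * n1 * coord 3 x * coord 4 x
              + N * coord 4 x / (rhoF x) ^ 3))"
definition MU3 :: "real \<Rightarrow> real \<Rightarrow> real \<Rightarrow> real \<Rightarrow> real \<Rightarrow> real^6 \<Rightarrow> real" where
  "MU3 c N n n1 n2 = (\<lambda>x. - c * coord 5 x * (3 * n + 5 * n1 * coord 3 x + 5 * n2 * coord 4 x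
              + N * coord 5 x / rhoF x))"

lemma MU1_r: "MU1 c N n n1 n2 x = c * (- n * coord 3 x - n1 * (coord 3 x)\<^sup>2 + 2 * n1 * (coord 4 x)\<^sup>2
              + n1 * (coord 5 x)\<^sup>2 - 3 * n2 * coord 3 x * coord 4 x + N * coord 3 x * rr x ^ 3)"
  by (simp add: MU1_def rr_def rhoF_def power_one_over divide_inverse power_inverse)
lemma MU2_r: "MU2 c N n n1 n2 x = c * (- n * coord 4 x + 2 * n2 * (coord 3 x)\<^sup>2 - n2 * (coord 4 x)\<^sup>2
              + n2 * (coord 5 x)\<^sup>2 - 3 * n1 * coord 3 x * coord 4 x + N * coord 4 x * rr x ^ 3)"
  by (simp add: MU2_def rr_def rhoF_def power_one_over divide_inverse power_inverse)
lemma MU3_r: "MU3 c N n n1 n2 x = - c * coord 5 x * (3 * n + 5 * n1 * coord 3 x + 5 * n2 * coord 4 x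
              + N * coord 5 x * rr x)"
  by (simp add: MU3_def rr_def rhoF_def divide_inverse)

definition Dm :: "real \<Rightarrow> real \<Rightarrow> real \<Rightarrow> real \<Rightarrow> real \<Rightarrow> real^6 \<Rightarrow> nat \<Rightarrow> nat \<Rightarrow> real" where
  "Dm c N n n1 n2 x a b = (let g1 = coord 3 x; g2 = coord 4 x; g3 = coord 5 x; r = rr x in
     if a = 0 then
       (if b = 0 then c * (- n - 2 * n1 * g1 - 3 * n2 * g2 + N * (r^3 - 3 * g1^2 * r^5))
        else if b = 1 then c * (4 * n1 * g2 - 3 * n2 * g1 - 3 * N * g1 * g2 * r^5)
        else c * (2 * n1 * g3))
     else if a = 1 then
       (if b = 0 then c * (4 * n2 * g1 - 3 * n1 * g2 - 3 * N * g1 * g2 * r^5)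
        else if b = 1 then c * (- n - 2 * n2 * g2 - 3 * n1 * g1 + N * (r^3 - 3 * g2^2 * r^5))
        else c * (2 * n2 * g3))
     else
       (if b = 0 then - c * (5 * n1 * g3 - N * g3^2 * g1 * r^3)
        else if b = 1 then - c * (5 * n2 * g3 - N * g3^2 * g2 * r^3)
        else - c * (3 * n + 5 * n1 * g1 + 5 * n2 * g2 + 2 * N * g3 * r)))"

lemma curl_Dm: "coord 3 x * (Dm c N n n1 n2 x 2 1 - Dm c N n n1 n2 x 1 2)
   + coord 4 x * (Dm c N n n1 n2 x 0 2 - Dm c N n n1 n2 x 2 0)
   + coord 5 x * (Dm c N n n1 n2 x 1 0 - Dm c N n n1 n2 x 0 1) = 0"
  by (simp add: Dm_def Let_def algebra_simps)

lemma dom_pos: "x \<in> domR3D \<Longrightarrow> (coord 3 x)\<^sup>2 + (coord 4 x)\<^sup>2 > 0"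
  by (simp add: domR3D_def)

lemma MU1_der:
  assumes "x \<in> domR3D"
  shows "(MU1 c N n n1 n2 has_derivative (\<lambda>h. Dm c N n n1 n2 x 0 0 * coord 3 h + Dm c N n n1 n2 x 0 1 * coord 4 h
     + Dm c N n n1 n2 x 0 2 * coord 5 h)) (at x)"
  unfolding MU1_r[abs_def]
  apply (intro derivative_eq_intros)
  apply (rule refl)+
  apply (rule rr_der[OF dom_pos[OF assms]])
  apply (rule refl)+
  apply (rule ext)
  apply (simp add: Dm_def Let_def)
  apply algebra
  done


lemma MU2_der:
  assumes "x \<in> domR3D"
  shows "(MU2 c N n n1 n2 has_derivative (\<lambda>h. Dm c N n n1 n2 x 1 0 * coord 3 h + Dm c N n n1 n2 x 1 1 * coord 4 h
     + Dm c N n n1 n2 x 1 2 * coord 5 h)) (at x)"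
  unfolding MU2_r[abs_def]
  apply (intro derivative_eq_intros)
  apply (rule refl)+
  apply (rule rr_der[OF dom_pos[OF assms]])
  apply (rule refl)+
  apply (rule ext)
  apply (simp add: Dm_def Let_def)
  apply algebra
  done

lemma MU3_der:
  assumes "x \<in> domR3D"
  shows "(MU3 c N n n1 n2 has_derivative (\<lambda>h. Dm c N n n1 n2 x 2 0 * coord 3 h + Dm c N n n1 n2 x 2 1 * coord 4 h
     + Dm c N n n1 n2 x 2 2 * coord 5 h)) (at x)"
  unfolding MU3_r[abs_def]
  apply (intro derivative_eq_intros)
  apply (rule refl)+
  apply (rule rr_der[OF dom_pos[OF assms]])
  apply (rule refl)+
  apply (rule ext)
  apply (simp add: Dm_def Let_def)
  apply algebra
  done


lemma partial_MU1: "x \<in> domR3D \<Longrightarrow> j < 6 \<Longrightarrow> partial j (MU1 c N n n1 n2) x = dm (Dm c N n n1 n2 x) 0 j"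
  apply (subst partial_eq[OF MU1_der], assumption)
  apply (drule less6) apply (elim disjE) apply (simp_all add: coord_basis dm_def)
  done
lemma partial_MU2: "x \<in> domR3D \<Longrightarrow> j < 6 \<Longrightarrow> partial j (MU2 c N n n1 n2) x = dm (Dm c N n n1 n2 x) 1 j"
  apply (subst partial_eq[OF MU2_der], assumption)
  apply (drule less6) apply (elim disjE) apply (simp_all add: coord_basis dm_def)
  done
lemma partial_MU3: "x \<in> domR3D \<Longrightarrow> j < 6 \<Longrightarrow> partial j (MU3 c N n n1 n2) x = dm (Dm c N n n1 n2 x) 2 j"
  apply (subst partial_eq[OF MU3_der], assumption)
  apply (drule less6) apply (elim disjE) apply (simp_all add: coord_basis dm_def)
  done

lemma diff_MU1: "x \<in> domR3D \<Longrightarrow> MU1 c N n n1 n2 differentiable (at x)"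
  using MU1_der differentiableI by blast
lemma diff_MU2: "x \<in> domR3D \<Longrightarrow> MU2 c N n n1 n2 differentiable (at x)"
  using MU2_der differentiableI by blast
lemma diff_MU3: "x \<in> domR3D \<Longrightarrow> MU3 c N n n1 n2 differentiable (at x)"
  using MU3_der differentiableI by blast

lemma Sm_MU1: "Sm (MU1 c N n n1 n2)"
  unfolding MU1_r[abs_def] by (intro Sm_intros) simp_all
lemma Sm_MU2: "Sm (MU2 c N n n1 n2)"
  unfolding MU2_r[abs_def] by (intro Sm_intros) simp_all
lemma Sm_MU3: "Sm (MU3 c N n n1 n2)"
  unfolding MU3_r[abs_def] by (intro Sm_intros) simp_all


definition CC :: "real \<Rightarrow> real \<Rightarrow> real \<Rightarrow> real \<Rightarrow> real \<Rightarrow> real^6 \<Rightarrow> real" where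
  "CC c N n n1 n2 = (\<lambda>x. coord 0 x * coord 3 x + coord 1 x * coord 4 x + coord 2 x * coord 5 x
              + c * (n + n1 * coord 3 x + n2 * coord 4 x)
                  * (2 * (coord 3 x)\<^sup>2 + 2 * (coord 4 x)\<^sup>2 + (coord 5 x)\<^sup>2)
              + 1/2 * c * N * ((coord 5 x * (rhoF x)\<^sup>2 - 2) / rhoF x
                  - ((coord 3 x)\<^sup>2 + (coord 4 x)\<^sup>2 + (coord 5 x)\<^sup>2)
                    * arctan (coord 5 x / rhoF x)))"

lemma CC_r: "CC c N n n1 n2 x = coord 0 x * coord 3 x + coord 1 x * coord 4 x + coord 2 x * coord 5 x
              + c * (n + n1 * coord 3 x + n2 * coord 4 x)
                  * (2 * (coord 3 x)\<^sup>2 + 2 * (coord 4 x)\<^sup>2 + (coord 5 x)\<^sup>2)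
              + 1/2 * c * N * ((coord 5 x * ((coord 3 x)\<^sup>2 + (coord 4 x)\<^sup>2) - 2) * rr x
                  - ((coord 3 x)\<^sup>2 + (coord 4 x)\<^sup>2 + (coord 5 x)\<^sup>2) * AA x)"
proof -
  have rho2: "(rhoF x)\<^sup>2 = (coord 3 x)\<^sup>2 + (coord 4 x)\<^sup>2" by (simp add: rhoF_def)
  have h1: "\<And>a. a / rhoF x = a * rr x" by (simp add: rr_def rhoF_def divide_inverse)
  have h2: "AA x = arctan (coord 5 x / rhoF x)" by (simp add: AA_def h1)
  show ?thesis unfolding CC_def rho2 h2 h1 by (rule refl)
qed

lemma SmT1: "Sm (\<lambda>x. coord 0 x * coord 3 x + coord 1 x * coord 4 x + coord 2 x * coord 5 x)"
  by (intro Sm_intros) simp_all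
lemma SmT2: "Sm (\<lambda>x. c * (n + n1 * coord 3 x + n2 * coord 4 x)
                  * (2 * (coord 3 x)\<^sup>2 + 2 * (coord 4 x)\<^sup>2 + (coord 5 x)\<^sup>2))"
  by (intro Sm_intros) simp_all
lemma SmT3: "Sm (\<lambda>x. (coord 5 x * ((coord 3 x)\<^sup>2 + (coord 4 x)\<^sup>2) - 2) * rr x)"
  by (intro Sm_intros) simp_all
lemma SmT4: "Sm (\<lambda>x. ((coord 3 x)\<^sup>2 + (coord 4 x)\<^sup>2 + (coord 5 x)\<^sup>2) * AA x)"
  by (intro Sm_intros) simp_all


definition CD :: "real \<Rightarrow> real \<Rightarrow> real \<Rightarrow> real \<Rightarrow> real \<Rightarrow> real^6 \<Rightarrow> real^6 \<Rightarrow> real" where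
  "CD c N n n1 n2 x h = (let g1 = coord 3 x; g2 = coord 4 x; g3 = coord 5 x;
      h3 = coord 3 h; h4 = coord 4 h; h5 = coord 5 h;
      r = rr x; q = qq x; A = AA x; s = g1\<^sup>2 + g2\<^sup>2; R = s + g3\<^sup>2;
      W = 2 * g1\<^sup>2 + 2 * g2\<^sup>2 + g3\<^sup>2; P = n + n1 * g1 + n2 * g2; K = g3 * s - 2 in
    coord 0 h * g1 + coord 0 x * h3 + coord 1 h * g2 + coord 1 x * h4 + coord 2 h * g3 + coord 2 x * h5
    + c * ((n1 * h3 + n2 * h4) * W + P * (4 * g1 * h3 + 4 * g2 * h4 + 2 * g3 * h5))
    + 1/2 * c * N * ((h5 * s + g3 * (2 * g1 * h3 + 2 * g2 * h4)) * r + K * (- (g1 * h3 + g2 * h4) * r ^ 3)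
        - 2 * (g1 * h3 + g2 * h4 + g3 * h5) * A - R * (q * (h5 * s * r - g3 * (g1 * h3 + g2 * h4) * r))))"

lemma Sm_CC: "Sm (CC c N n n1 n2)"
  unfolding CC_r[abs_def]
  by (intro Sm_add Sm_diff Sm_mult[OF Sm_const] SmT1 SmT2 SmT3 SmT4)

lemma CC_der:
  assumes "x \<in> domR3D"
  shows "(CC c N n n1 n2 has_derivative CD c N n n1 n2 x) (at x)"
  unfolding CC_r[abs_def]
  apply (intro derivative_eq_intros)
  apply (rule refl | rule rr_der[OF dom_pos[OF assms]] | rule AA_der[OF dom_pos[OF assms]])+
  apply (rule ext)
  apply (simp add: CD_def Let_def)
  apply algebra
  done


lemma rel_rr: "x \<in> domR3D \<Longrightarrow> rr x ^ 2 * ((coord 3 x)\<^sup>2 + (coord 4 x)\<^sup>2) = 1"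
proof -
  assume "x \<in> domR3D"
  then have p: "(coord 3 x)\<^sup>2 + (coord 4 x)\<^sup>2 > 0" by (rule dom_pos)
  define s where "s = (coord 3 x)\<^sup>2 + (coord 4 x)\<^sup>2"
  have sp: "s > 0" using p by (simp add: s_def)
  have "rr x = 1 / sqrt s" by (simp add: rr_def s_def)
  then have "rr x ^ 2 = 1 / s" using sp by (simp add: power_divide)
  then have "rr x ^ 2 * s = 1" using sp by simp
  then show ?thesis by (simp add: s_def)
qed
lemma rel_qq: "x \<in> domR3D \<Longrightarrow> qq x * ((coord 3 x)\<^sup>2 + (coord 4 x)\<^sup>2 + (coord 5 x)\<^sup>2) = 1"
proof -
  assume "x \<in> domR3D"
  then have "(coord 3 x)\<^sup>2 + (coord 4 x)\<^sup>2 + (coord 5 x)\<^sup>2 > 0" using dom_pos[of x] by (simp add: add_pos_nonneg)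
  then show ?thesis by (simp add: qq_def)
qed

lemma CD_basis: "j < 6 \<Longrightarrow> CD c N n n1 n2 x (basis6 j) = (let g1 = coord 3 x; g2 = coord 4 x; g3 = coord 5 x;
      h3 = dv 3 j; h4 = dv 4 j; h5 = dv 5 j;
      r = rr x; q = qq x; A = AA x; s = g1\<^sup>2 + g2\<^sup>2; R = s + g3\<^sup>2;
      W = 2 * g1\<^sup>2 + 2 * g2\<^sup>2 + g3\<^sup>2; P = n + n1 * g1 + n2 * g2; K = g3 * s - 2 in
    dv 0 j * g1 + coord 0 x * h3 + dv 1 j * g2 + coord 1 x * h4 + dv 2 j * g3 + coord 2 x * h5
    + c * ((n1 * h3 + n2 * h4) * W + P * (4 * g1 * h3 + 4 * g2 * h4 + 2 * g3 * h5))
    + 1/2 * c * N * ((h5 * s + g3 * (2 * g1 * h3 + 2 * g2 * h4)) * r + K * (- (g1 * h3 + g2 * h4) * r ^ 3)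
        - 2 * (g1 * h3 + g2 * h4 + g3 * h5) * A - R * (q * (h5 * s * r - g3 * (g1 * h3 + g2 * h4) * r))))"
  unfolding CD_def dv_def by (simp add: coord_basis)

lemma row0:
  assumes r1: "rr x ^ 2 * ((coord 3 x)\<^sup>2 + (coord 4 x)\<^sup>2) = 1"
    and r2: "qq x * ((coord 3 x)\<^sup>2 + (coord 4 x)\<^sup>2 + (coord 5 x)\<^sup>2) = 1"
  shows "(\<Sum>j<6. Ptab (coord 0 x) (coord 1 x) (coord 2 x) (coord 3 x) (coord 4 x) (coord 5 x)
     (MU1 c N n n1 n2 x) (MU2 c N n n1 n2 x) (MU3 c N n n1 n2 x) 0 j * CD c N n n1 n2 x (basis6 j)) = 0"
  using r1 r2
  by (simp only: sum6, simp add: Ptab_def CD_basis dv_def Let_def MU1_r MU2_r MU3_r,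
      (simp only: One_nat_def[symmetric])?, algebra?)

lemma row1:
  assumes r1: "rr x ^ 2 * ((coord 3 x)\<^sup>2 + (coord 4 x)\<^sup>2) = 1"
    and r2: "qq x * ((coord 3 x)\<^sup>2 + (coord 4 x)\<^sup>2 + (coord 5 x)\<^sup>2) = 1"
  shows "(\<Sum>j<6. Ptab (coord 0 x) (coord 1 x) (coord 2 x) (coord 3 x) (coord 4 x) (coord 5 x)
     (MU1 c N n n1 n2 x) (MU2 c N n n1 n2 x) (MU3 c N n n1 n2 x) 1 j * CD c N n n1 n2 x (basis6 j)) = 0"
  using r1 r2
  by (simp only: sum6, simp add: Ptab_def CD_basis dv_def Let_def MU1_r MU2_r MU3_r,
      (simp only: One_nat_def[symmetric])?, algebra?)

lemma row2:
  assumes r1: "rr x ^ 2 * ((coord 3 x)\<^sup>2 + (coord 4 x)\<^sup>2) = 1"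
    and r2: "qq x * ((coord 3 x)\<^sup>2 + (coord 4 x)\<^sup>2 + (coord 5 x)\<^sup>2) = 1"
  shows "(\<Sum>j<6. Ptab (coord 0 x) (coord 1 x) (coord 2 x) (coord 3 x) (coord 4 x) (coord 5 x)
     (MU1 c N n n1 n2 x) (MU2 c N n n1 n2 x) (MU3 c N n n1 n2 x) 2 j * CD c N n n1 n2 x (basis6 j)) = 0"
  apply (simp only: sum6)
  apply (simp add: Ptab_def CD_basis dv_def Let_def MU1_r MU2_r MU3_r)
  apply (simp only: One_nat_def[symmetric])
  apply (simp add: field_simps power2_eq_square power3_eq_cube)
  done

lemma row3:
  assumes r1: "rr x ^ 2 * ((coord 3 x)\<^sup>2 + (coord 4 x)\<^sup>2) = 1"
    and r2: "qq x * ((coord 3 x)\<^sup>2 + (coord 4 x)\<^sup>2 + (coord 5 x)\<^sup>2) = 1"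
  shows "(\<Sum>j<6. Ptab (coord 0 x) (coord 1 x) (coord 2 x) (coord 3 x) (coord 4 x) (coord 5 x)
     (MU1 c N n n1 n2 x) (MU2 c N n n1 n2 x) (MU3 c N n n1 n2 x) 3 j * CD c N n n1 n2 x (basis6 j)) = 0"
  using r1 r2
  by (simp only: sum6, simp add: Ptab_def CD_basis dv_def Let_def MU1_r MU2_r MU3_r,
      (simp only: One_nat_def[symmetric])?, algebra?)

lemma row4:
  assumes r1: "rr x ^ 2 * ((coord 3 x)\<^sup>2 + (coord 4 x)\<^sup>2) = 1"
    and r2: "qq x * ((coord 3 x)\<^sup>2 + (coord 4 x)\<^sup>2 + (coord 5 x)\<^sup>2) = 1"
  shows "(\<Sum>j<6. Ptab (coord 0 x) (coord 1 x) (coord 2 x) (coord 3 x) (coord 4 x) (coord 5 x)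
     (MU1 c N n n1 n2 x) (MU2 c N n n1 n2 x) (MU3 c N n n1 n2 x) 4 j * CD c N n n1 n2 x (basis6 j)) = 0"
  using r1 r2
  by (simp only: sum6, simp add: Ptab_def CD_basis dv_def Let_def MU1_r MU2_r MU3_r,
      (simp only: One_nat_def[symmetric])?, algebra?)

lemma row5:
  assumes r1: "rr x ^ 2 * ((coord 3 x)\<^sup>2 + (coord 4 x)\<^sup>2) = 1"
    and r2: "qq x * ((coord 3 x)\<^sup>2 + (coord 4 x)\<^sup>2 + (coord 5 x)\<^sup>2) = 1"
  shows "(\<Sum>j<6. Ptab (coord 0 x) (coord 1 x) (coord 2 x) (coord 3 x) (coord 4 x) (coord 5 x)
     (MU1 c N n n1 n2 x) (MU2 c N n n1 n2 x) (MU3 c N n n1 n2 x) 5 j * CD c N n n1 n2 x (basis6 j)) = 0"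
  using r1 r2
  by (simp only: sum6, simp add: Ptab_def CD_basis dv_def Let_def MU1_r MU2_r MU3_r,
      (simp only: One_nat_def[symmetric])?, algebra?)


lemma casimir_rows:
  assumes x: "x \<in> domR3D" and i: "i < 6"
  shows "(\<Sum>j<6. Ptab (coord 0 x) (coord 1 x) (coord 2 x) (coord 3 x) (coord 4 x) (coord 5 x)
     (MU1 c N n n1 n2 x) (MU2 c N n n1 n2 x) (MU3 c N n n1 n2 x) i j * CD c N n n1 n2 x (basis6 j)) = 0"
  using less6[OF i] row0[OF rel_rr[OF x] rel_qq[OF x]] row1[OF rel_rr[OF x] rel_qq[OF x]]
    row2[OF rel_rr[OF x] rel_qq[OF x]] row3[OF rel_rr[OF x] rel_qq[OF x]]
    row4[OF rel_rr[OF x] rel_qq[OF x]] row5[OF rel_rr[OF x] rel_qq[OF x]]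
  by (elim disjE) simp_all

lemma smooth_partial: "smooth_on6 U f \<Longrightarrow> k < 6 \<Longrightarrow> smooth_on6 U (partial k f)"
  unfolding smooth_on6_def
proof (intro allI impI)
  fix ks :: "nat list"
  assume H: "\<forall>ks. (\<forall>k\<in>set ks. k < 6) \<longrightarrow> iter_partial ks f differentiable_on U"
    and k: "k < 6" and ks: "\<forall>k\<in>set ks. k < 6"
  have "iter_partial (ks @ [k]) f differentiable_on U" using H ks k by auto
  then show "iter_partial ks (partial k f) differentiable_on U" by (simp add: iter_partial_append)
qed

lemma smooth_diff: "smooth_on6 domR3D f \<Longrightarrow> x \<in> domR3D \<Longrightarrow> f differentiable (at x)"
  unfolding smooth_on6_def
  using differentiable_on_eq_differentiable_at[OF open_dom, of f]
  by (metis empty_iff empty_set iter_partial.simps(1))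

lemma line_of_diff:
  assumes "f differentiable (at y)"
  shows "((\<lambda>t. f (y + t *\<^sub>R basis6 k)) has_real_derivative partial k f y) (at 0)"
proof -
  obtain f' where f: "(f has_derivative f') (at y)" using assms unfolding differentiable_def by blast
  show ?thesis using partial_has_derivative[OF f] partial_eq[OF f] by simp
qed

lemma hess_sym:
  assumes g: "smooth_on6 domR3D g" and x: "x \<in> domR3D" and j: "j < 6" and k: "k < 6"
  shows "partial j (partial k g) x = partial k (partial j g) x"
proof (rule schwarz[OF open_dom x])
  show "\<forall>y\<in>domR3D. ((\<lambda>t. g (y + t *\<^sub>R basis6 k)) has_real_derivative partial k g y) (at 0)"
    using smooth_diff[OF g] line_of_diff by blast
  show "\<forall>y\<in>domR3D. ((\<lambda>t. g (y + t *\<^sub>R basis6 j)) has_real_derivative partial j g y) (at 0)"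
    using smooth_diff[OF g] line_of_diff by blast
  show "\<forall>y\<in>domR3D. ((\<lambda>t. partial k g (y + t *\<^sub>R basis6 j)) has_real_derivative partial j (partial k g) y) (at 0)"
    using smooth_diff[OF smooth_partial[OF g k]] line_of_diff by blast
  show "\<forall>y\<in>domR3D. ((\<lambda>t. partial j g (y + t *\<^sub>R basis6 k)) has_real_derivative partial k (partial j g) y) (at 0)"
    using smooth_diff[OF smooth_partial[OF g j]] line_of_diff by blast
  show "isCont (partial j (partial k g)) x"
    using smooth_diff[OF smooth_partial[OF smooth_partial[OF g k] j] x] differentiable_imp_continuous_within by blast
  show "isCont (partial k (partial j g)) x"
    using smooth_diff[OF smooth_partial[OF smooth_partial[OF g j] k] x] differentiable_imp_continuous_within by blast
qed

abbreviation "PM c N n n1 n2 \<equiv> PiMat (MU1 c N n n1 n2) (MU2 c N n n1 n2) (MU3 c N n n1 n2)"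

lemma diff_PM:
  assumes x: "x \<in> domR3D" and k: "k < 6" and l: "l < 6"
  shows "(\<lambda>y. PM c N n n1 n2 y k l) differentiable (at x)"
  unfolding PiMat_Ptab
  by (rule diff_Ptab[OF k l]) (auto intro: diff_MU1[OF x] diff_MU2[OF x] diff_MU3[OF x] differentiableI[OF coord_has_derivative])

lemma partial_PM:
  assumes x: "x \<in> domR3D" and k: "k < 6" and l: "l < 6" and j: "j < 6"
  shows "partial j (\<lambda>y. PM c N n n1 n2 y k l) x = DPt (Dm c N n n1 n2 x) j k l"
  unfolding PiMat_Ptab DPt_def
  apply (subst partial_Ptab[OF k l])
  apply (auto intro: diff_MU1[OF x] diff_MU2[OF x] diff_MU3[OF x] differentiableI[OF coord_has_derivative])[9]
  using j by (simp add: partial_coord dv_def partial_MU1[OF x j] partial_MU2[OF x j] partial_MU3[OF x j])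

lemma bracket_partial:
  assumes g: "smooth_on6 domR3D g" and h: "smooth_on6 domR3D h" and x: "x \<in> domR3D" and j: "j < 6"
  shows "partial j (bracket (MU1 c N n n1 n2) (MU2 c N n n1 n2) (MU3 c N n n1 n2) g h) x =
    (\<Sum>k\<in>{..<6}. \<Sum>l\<in>{..<6}. partial j (partial k g) x * PM c N n n1 n2 x k l * partial l h x
       + partial k g x * partial j (\<lambda>y. PM c N n n1 n2 y k l) x * partial l h x
       + partial k g x * PM c N n n1 n2 x k l * partial j (partial l h) x)"
proof -
  have dg: "\<And>k::nat. k < 6 \<Longrightarrow> partial k g differentiable (at x)"
    using smooth_diff[OF smooth_partial[OF g] x] by blast
  have dh: "\<And>k::nat. k < 6 \<Longrightarrow> partial k h differentiable (at x)"
    using smooth_diff[OF smooth_partial[OF h] x] by blast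
  have dP: "\<And>k l::nat. k < 6 \<Longrightarrow> l < 6 \<Longrightarrow> (\<lambda>y. PM c N n n1 n2 y k l) differentiable (at x)"
    using diff_PM[OF x] by blast
  have dprod: "\<And>k l::nat. k < 6 \<Longrightarrow> l < 6 \<Longrightarrow>
      (\<lambda>y. partial k g y * PM c N n n1 n2 y k l * partial l h y) differentiable (at x)"
    using dg dh dP by (intro differentiable_mult) auto
  have eq: "bracket (MU1 c N n n1 n2) (MU2 c N n n1 n2) (MU3 c N n n1 n2) g h =
     (\<lambda>y. \<Sum>k\<in>{..<6}. \<Sum>l\<in>{..<6}. partial k g y * PM c N n n1 n2 y k l * partial l h y)"
    by (rule ext) (simp add: bracket_def grad6_def)
  have "partial j (\<lambda>y. \<Sum>k\<in>{..<6}. \<Sum>l\<in>{..<6}. partial k g y * PM c N n n1 n2 y k l * partial l h y) x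
     = (\<Sum>k\<in>{..<6}. partial j (\<lambda>y. \<Sum>l\<in>{..<6}. partial k g y * PM c N n n1 n2 y k l * partial l h y) x)"
    by (rule partial_sum) (use dprod in auto)
  also have "\<dots> = (\<Sum>k\<in>{..<6}. \<Sum>l\<in>{..<6}. partial j (\<lambda>y. partial k g y * PM c N n n1 n2 y k l * partial l h y) x)"
    by (intro sum.cong refl partial_sum) (use dprod in auto)
  also have "\<dots> = (\<Sum>k\<in>{..<6}. \<Sum>l\<in>{..<6}. partial j (partial k g) x * PM c N n n1 n2 x k l * partial l h x
       + partial k g x * partial j (\<lambda>y. PM c N n n1 n2 y k l) x * partial l h x
       + partial k g x * PM c N n n1 n2 x k l * partial j (partial l h) x)"
  proof (intro sum.cong refl)
    fix k l :: nat assume k: "k \<in> {..<6}" and l: "l \<in> {..<6}"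
    have a: "(\<lambda>y. partial k g y * PM c N n n1 n2 y k l) differentiable (at x)"
      using dg dP k l by (intro differentiable_mult) auto
    have "partial j (\<lambda>y. partial k g y * PM c N n n1 n2 y k l * partial l h y) x
      = (partial k g x * PM c N n n1 n2 x k l) * partial j (partial l h) x
        + partial j (\<lambda>y. partial k g y * PM c N n n1 n2 y k l) x * partial l h x"
      by (rule partial_mult[OF a]) (use dh l in auto)
    also have "partial j (\<lambda>y. partial k g y * PM c N n n1 n2 y k l) x
      = partial k g x * partial j (\<lambda>y. PM c N n n1 n2 y k l) x + partial j (partial k g) x * PM c N n n1 n2 x k l"
      by (rule partial_mult) (use dg dP k l in auto)
    finally show "partial j (\<lambda>y. partial k g y * PM c N n n1 n2 y k l * partial l h y) x =
        partial j (partial k g) x * PM c N n n1 n2 x k l * partial l h x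
       + partial k g x * partial j (\<lambda>y. PM c N n n1 n2 y k l) x * partial l h x
       + partial k g x * PM c N n n1 n2 x k l * partial j (partial l h) x"
      by (simp add: algebra_simps)
  qed
  finally show ?thesis unfolding eq .
qed


lemma bracket_outer: "bracket m1 m2 m3 f G x = (\<Sum>i\<in>{..<6}. \<Sum>j\<in>{..<6}. partial i f x * PiMat m1 m2 m3 x i j * partial j G x)"
  by (simp add: bracket_def grad6_def)

lemma J_form:
  assumes f: "smooth_on6 domR3D f" and g: "smooth_on6 domR3D g" and h: "smooth_on6 domR3D h" and x: "x \<in> domR3D"
  shows "bracket (MU1 c N n n1 n2) (MU2 c N n n1 n2) (MU3 c N n n1 n2) f
           (bracket (MU1 c N n n1 n2) (MU2 c N n n1 n2) (MU3 c N n n1 n2) g h) x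
     = Jf {..<6} (\<lambda>i j. PM c N n n1 n2 x i j) (\<lambda>j k l. partial j (\<lambda>y. PM c N n n1 n2 y k l) x)
         (\<lambda>i. partial i f x) (\<lambda>i. partial i g x) (\<lambda>i. partial i h x)
         (\<lambda>j k. partial j (partial k g) x) (\<lambda>j k. partial j (partial k h) x)"
  unfolding bracket_outer[of _ _ _ f] Jf_def
  by (intro sum.cong refl) (simp add: bracket_partial[OF g h x])

lemma jacobi_MU:
  assumes f: "smooth_on6 domR3D f" and g: "smooth_on6 domR3D g" and h: "smooth_on6 domR3D h" and x: "x \<in> domR3D"
  shows "bracket (MU1 c N n n1 n2) (MU2 c N n n1 n2) (MU3 c N n n1 n2) f
           (bracket (MU1 c N n n1 n2) (MU2 c N n n1 n2) (MU3 c N n n1 n2) g h) x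
       + bracket (MU1 c N n n1 n2) (MU2 c N n n1 n2) (MU3 c N n n1 n2) g
           (bracket (MU1 c N n n1 n2) (MU2 c N n n1 n2) (MU3 c N n n1 n2) h f) x
       + bracket (MU1 c N n n1 n2) (MU2 c N n n1 n2) (MU3 c N n n1 n2) h
           (bracket (MU1 c N n n1 n2) (MU2 c N n n1 n2) (MU3 c N n n1 n2) f g) x = 0"
  unfolding J_form[OF f g h x] J_form[OF g h f x] J_form[OF h f g x]
proof (rule jacobi_alg)
  fix i j :: nat assume "i \<in> {..<6}" "j \<in> {..<6}"
  then show "PM c N n n1 n2 x i j = - PM c N n n1 n2 x j i"
    unfolding PiMat_Ptab by (intro Ptab_skew) auto
next
  fix i j :: nat assume "i \<in> {..<6}" "j \<in> {..<6}"
  then show "partial i (partial j f) x = partial j (partial i f) x" using hess_sym[OF f x] by auto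
next
  fix i j :: nat assume "i \<in> {..<6}" "j \<in> {..<6}"
  then show "partial i (partial j g) x = partial j (partial i g) x" using hess_sym[OF g x] by auto
next
  fix i j :: nat assume "i \<in> {..<6}" "j \<in> {..<6}"
  then show "partial i (partial j h) x = partial j (partial i h) x" using hess_sym[OF h x] by auto
next
  fix i k l :: nat assume ikl: "i \<in> {..<6}" "k \<in> {..<6}" "l \<in> {..<6}"
  have "(\<Sum>j\<in>{..<6}. PM c N n n1 n2 x i j * partial j (\<lambda>y. PM c N n n1 n2 y k l) x
        + PM c N n n1 n2 x k j * partial j (\<lambda>y. PM c N n n1 n2 y l i) x
        + PM c N n n1 n2 x l j * partial j (\<lambda>y. PM c N n n1 n2 y i k) x)
      = (\<Sum>j<6. Ptab (coord 0 x) (coord 1 x) (coord 2 x) (coord 3 x) (coord 4 x) (coord 5 x)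
              (MU1 c N n n1 n2 x) (MU2 c N n n1 n2 x) (MU3 c N n n1 n2 x) i j * DPt (Dm c N n n1 n2 x) j k l
        + Ptab (coord 0 x) (coord 1 x) (coord 2 x) (coord 3 x) (coord 4 x) (coord 5 x)
              (MU1 c N n n1 n2 x) (MU2 c N n n1 n2 x) (MU3 c N n n1 n2 x) k j * DPt (Dm c N n n1 n2 x) j l i
        + Ptab (coord 0 x) (coord 1 x) (coord 2 x) (coord 3 x) (coord 4 x) (coord 5 x)
              (MU1 c N n n1 n2 x) (MU2 c N n n1 n2 x) (MU3 c N n n1 n2 x) l j * DPt (Dm c N n n1 n2 x) j i k)"
    by (intro sum.cong refl) (use ikl in \<open>simp add: partial_PM[OF x], simp add: PiMat_Ptab\<close>)
  also have "\<dots> = 0"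
    by (rule schouten_tab[OF curl_Dm]) (use ikl in auto)
  finally show "(\<Sum>j\<in>{..<6}. PM c N n n1 n2 x i j * partial j (\<lambda>y. PM c N n n1 n2 y k l) x
        + PM c N n n1 n2 x k j * partial j (\<lambda>y. PM c N n n1 n2 y l i) x
        + PM c N n n1 n2 x l j * partial j (\<lambda>y. PM c N n n1 n2 y i k) x) = 0" .
qed

lemma casimir_MU: "is_casimir_on domR3D (MU1 c N n n1 n2) (MU2 c N n n1 n2) (MU3 c N n n1 n2) (CC c N n n1 n2)"
  unfolding is_casimir_on_def
proof (intro conjI ballI allI impI)
  show "smooth_on6 domR3D (CC c N n n1 n2)" by (rule smooth_from_Sm[OF Sm_CC])
next
  fix x i assume x: "x \<in> domR3D" and i: "(i::nat) < 6"
  show "(\<Sum>j<6. PM c N n n1 n2 x i j * grad6 (CC c N n n1 n2) x j) = 0"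
    unfolding grad6_def partial_eq[OF CC_der[OF x]] PiMat_Ptab
    by (rule casimir_rows[OF x i])
qed

theorem mainTheorem9:
  fixes c N n n1 n2 :: real
  defines "rho \<equiv> (\<lambda>x. sqrt ((coord 3 x)\<^sup>2 + (coord 4 x)\<^sup>2))"
  defines "mu1 \<equiv> (\<lambda>x. c * (- n * coord 3 x - n1 * (coord 3 x)\<^sup>2 + 2 * n1 * (coord 4 x)\<^sup>2
              + n1 * (coord 5 x)\<^sup>2 - 3 * n2 * coord 3 x * coord 4 x
              + N * coord 3 x / (rho x) ^ 3))"
  defines "mu2 \<equiv> (\<lambda>x. c * (- n * coord 4 x + 2 * n2 * (coord 3 x)\<^sup>2 - n2 * (coord 4 x)\<^sup>2
              + n2 * (coord 5 x)\<^sup>2 - 3 * n1 * coord 3 x * coord 4 x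
              + N * coord 4 x / (rho x) ^ 3))"
  defines "mu3 \<equiv> (\<lambda>x. - c * coord 5 x * (3 * n + 5 * n1 * coord 3 x + 5 * n2 * coord 4 x
              + N * coord 5 x / rho x))"
  defines "C \<equiv> (\<lambda>x. coord 0 x * coord 3 x + coord 1 x * coord 4 x + coord 2 x * coord 5 x
              + c * (n + n1 * coord 3 x + n2 * coord 4 x)
                  * (2 * (coord 3 x)\<^sup>2 + 2 * (coord 4 x)\<^sup>2 + (coord 5 x)\<^sup>2)
              + 1/2 * c * N * ((coord 5 x * (rho x)\<^sup>2 - 2) / rho x
                  - ((coord 3 x)\<^sup>2 + (coord 4 x)\<^sup>2 + (coord 5 x)\<^sup>2)
                    * arctan (coord 5 x / rho x)))"
  shows "defines_poisson_on domR3D mu1 mu2 mu3 \<and> is_casimir_on domR3D mu1 mu2 mu3 C"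
proof -
  have e1: "mu1 = MU1 c N n n1 n2" unfolding mu1_def rho_def MU1_def rhoF_def by (rule refl)
  have e2: "mu2 = MU2 c N n n1 n2" unfolding mu2_def rho_def MU2_def rhoF_def by (rule refl)
  have e3: "mu3 = MU3 c N n n1 n2" unfolding mu3_def rho_def MU3_def rhoF_def by (rule refl)
  have e4: "C = CC c N n n1 n2" unfolding C_def rho_def CC_def rhoF_def by (rule refl)
  show ?thesis unfolding e1 e2 e3 e4 defines_poisson_on_def
    using jacobi_MU casimir_MU by blast
qed

end
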